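(* Let $K\subset\mathbb{R}^d$ be compact and star-shaped, and for $x,y\in\mathbb{R}^d$ let $S(x,y)=\frac{x+y}2+\|x-y\|K$. Let $c>0$ and let $x,y,u,v\in\mathbb{R}^d$ satisfy $\|x-y\|\ge\|u-v\|$ and $\|\frac{x+y}2-\frac{u+v}2\|\le c\,\mathrm{diam}(K)\|x-y\|$. Then $$\mathrm{vol}(S(x,y)\setminus S(u,v))\ge\frac1{c+1}\frac{\mathrm{vol}(K)}{\mathrm{diam}(K)}\Big\|\frac{x+y}2-\frac{u+v}2\Big\|\,\|x-y\|^{d-1}.$$
   Context: $K$ star-shaped means $[0,z]\subset K$ for all $z\in K$. $\mathrm{diam}(K)=\sup\{\|u-v\|:u,v\in K\}$. *)

theory Defs
  imports "HOL-Analysis.Analysis"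
begin

definition star_shaped0 :: "'a::real_vector set \<Rightarrow> bool" where
  "star_shaped0 K \<longleftrightarrow> (\<forall>z\<in>K. closed_segment 0 z \<subseteq> K)"

definition Sset :: "'a::real_normed_vector set \<Rightarrow> 'a \<Rightarrow> 'a \<Rightarrow> 'a set" where
  "Sset K x y = (\<lambda>k. (1/2) *\<^sub>R (x + y) + norm (x - y) *\<^sub>R k) ` K"

end

theory Submission
  imports Defs
begin

lemma key:
  fixes K :: "'a::euclidean_space set" and w :: 'a
  assumes K: "compact K" and w: "w \<noteq> 0"
  shows "measure lebesgue K * norm w \<le> (diameter K + norm w) * measure lebesgue (K - (+) w ` K)"
proof -
  define D where "D = diameter K"
  define A where "A = K - (+) w ` K"
  define n where "n = nat (floor (D / norm w)) + 1"
  have nw: "norm w > 0" using w by simp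
  have D0: "D \<ge> 0" unfolding D_def by (simp add: diameter_ge_0 K compact_imp_bounded)
  have nD: "real n * norm w > D"
  proof -
    have fl: "real (nat (floor (D / norm w))) = of_int (floor (D / norm w))"
      using D0 nw by (simp add: divide_nonneg_pos)
    have "D / norm w < of_int (floor (D / norm w)) + 1" by linarith
    then have "D / norm w < real n" unfolding n_def of_nat_add of_nat_1 fl by linarith
    then show ?thesis using nw by (simp add: divide_less_eq)
  qed
  have Kc: "K \<in> sets lebesgue" using K by (simp add: lmeasurable_compact fmeasurableD)
  have Ameas: "A \<in> sets lebesgue" unfolding A_def
    using K by (intro sets.Diff Kc) (simp add: lmeasurable_compact fmeasurableD compact_translation)
  have tr: "(+) (real j *\<^sub>R w) ` A \<in> sets lebesgue" for j
    using lebesgue_sets_translation[OF Ameas, of "real j *\<^sub>R w"] by simp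
  have sub: "K \<subseteq> (\<Union>j\<in>{..<n}. (+) (real j *\<^sub>R w) ` A)"
  proof
    fix p assume p: "p \<in> K"
    define J where "J = {j. j \<le> n \<and> p \<in> (+) (real j *\<^sub>R w) ` K}"
    have "0 \<in> J" using p unfolding J_def by auto
    have fJ: "finite J" unfolding J_def by auto
    define j where "j = Max J"
    have jJ: "j \<in> J" unfolding j_def using fJ \<open>0 \<in> J\<close> by (intro Max_in) auto
    have "n \<notin> J"
    proof
      assume "n \<in> J"
      then obtain k where k: "k \<in> K" "p = real n *\<^sub>R w + k" unfolding J_def by auto
      have "norm (p - k) \<le> D" unfolding D_def using K p k
        by (metis compact_imp_bounded diameter_bounded_bound dist_norm)
      with k nD nw show False by simp
    qed
    with jJ have jn: "j < n" unfolding J_def by auto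
    have "Suc j \<notin> J"
    proof
      assume "Suc j \<in> J"
      then have "Suc j \<le> j" unfolding j_def using fJ by (rule Max_ge[rotated])
      then show False by simp
    qed
    hence "p \<notin> (+) (real (Suc j) *\<^sub>R w) ` K" using jn unfolding J_def by auto
    moreover obtain k where k: "k \<in> K" "p = real j *\<^sub>R w + k" using jJ unfolding J_def by auto
    ultimately have "k \<notin> (+) w ` K"
    proof (intro notI)
      assume "p \<notin> (+) (real (Suc j) *\<^sub>R w) ` K" "k \<in> (+) w ` K"
      then obtain k' where "k' \<in> K" "k = w + k'" "p \<notin> (+) (real (Suc j) *\<^sub>R w) ` K" by auto
      moreover have "p = real (Suc j) *\<^sub>R w + k'" using k \<open>k = w + k'\<close> by (simp add: algebra_simps)
      ultimately show False by blast
    qed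
    hence "k \<in> A" using k unfolding A_def by auto
    then show "p \<in> (\<Union>j\<in>{..<n}. (+) (real j *\<^sub>R w) ` A)" using jn k by auto
  qed
  have Ub: "bounded (\<Union>j\<in>{..<n}. (+) (real j *\<^sub>R w) ` A)"
  proof -
    have bA: "bounded A" unfolding A_def using K by (simp add: bounded_diff compact_imp_bounded)
    show ?thesis by (intro bounded_UN ballI bounded_translation bA finite_lessThan)
  qed
  have Um: "(\<Union>j\<in>{..<n}. (+) (real j *\<^sub>R w) ` A) \<in> sets lebesgue"
    using tr by auto
  have "measure lebesgue K \<le> measure lebesgue (\<Union>j\<in>{..<n}. (+) (real j *\<^sub>R w) ` A)"
    by (rule measure_mono_fmeasurable[OF sub Kc]) (rule bounded_set_imp_lmeasurable[OF Ub Um])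
  also have "\<dots> \<le> (\<Sum>j\<in>{..<n}. measure lebesgue ((+) (real j *\<^sub>R w) ` A))"
    by (rule measure_UNION_le) (auto intro: tr)
  also have "\<dots> = real n * measure lebesgue A" by (simp add: measure_translation)
  finally have 1: "measure lebesgue K \<le> real n * measure lebesgue A" .
  have "real n * norm w \<le> D + norm w"
  proof -
    have fl: "real (nat (floor (D / norm w))) = of_int (floor (D / norm w))"
      using D0 nw by (simp add: divide_nonneg_pos)
    have "of_int (floor (D / norm w)) \<le> D / norm w" by linarith
    then have "real n \<le> D / norm w + 1" unfolding n_def of_nat_add of_nat_1 fl by linarith
    then have "real n * norm w \<le> (D / norm w + 1) * norm w" using nw by (simp add: mult_right_mono)
    also have "\<dots> = D + norm w" using nw by (simp add: field_simps)
    finally show ?thesis .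
  qed
  hence "measure lebesgue K * norm w \<le> (D + norm w) * measure lebesgue A"
    using 1 nw
    by (smt (verit) measure_nonneg mult.commute mult_left_mono mult_right_mono mult.assoc)
  then show ?thesis unfolding D_def A_def .
qed

theorem lemma4p2:
  fixes K :: "'a::euclidean_space set" and x y u v :: 'a and c :: real
  assumes "compact K" and "star_shaped0 K" and "c > 0"
    and "norm (x - y) \<ge> norm (u - v)"
    and "norm ((1/2) *\<^sub>R (x + y) - (1/2) *\<^sub>R (u + v)) \<le> c * diameter K * norm (x - y)"
  shows "measure lebesgue (Sset K x y - Sset K u v) \<ge>
           (1 / (c + 1)) * (measure lebesgue K / diameter K)
           * norm ((1/2) *\<^sub>R (x + y) - (1/2) *\<^sub>R (u + v)) * norm (x - y) ^ (DIM('a) - 1)"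
proof -
  define m where "m = (1/2) *\<^sub>R (x + y)"
  define m' where "m' = (1/2) *\<^sub>R (u + v)"
  define r where "r = norm (x - y)"
  define r' where "r' = norm (u - v)"
  define D where "D = diameter K"
  define vK where "vK = measure lebesgue K"
  have K: "compact K" by fact
  have rr: "r' \<le> r" "0 \<le> r'" using assms(4) unfolding r_def r'_def by auto
  have hyp: "norm (m - m') \<le> c * D * r" using assms(5) unfolding m_def m'_def D_def r_def .
  have S1: "Sset K x y = (\<lambda>k. m + r *\<^sub>R k) ` K" unfolding Sset_def m_def r_def by simp
  have S2: "Sset K u v = (\<lambda>k. m' + r' *\<^sub>R k) ` K" unfolding Sset_def m'_def r'_def by simp
  have D0: "D \<ge> 0" unfolding D_def by (simp add: diameter_ge_0 K compact_imp_bounded)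
  have vK0: "vK \<ge> 0" unfolding vK_def by simp
  have LHS0: "measure lebesgue (Sset K x y - Sset K u v) \<ge> 0" by simp
  show ?thesis
  proof (cases "r = 0 \<or> D = 0 \<or> m = m'")
    case True
    then have "m = m' \<or> D = 0" using hyp by auto
    then have "(1 / (c + 1)) * (vK / D) * norm (m - m') * r ^ (DIM('a) - 1) = 0" by auto
    then show ?thesis using LHS0 unfolding m_def m'_def r_def vK_def D_def by linarith
  next
    case False
    then have r0: "r > 0" and Dp: "D > 0" and mm: "m \<noteq> m'" using D0 r_def by auto
    define w where "w = (1 / r) *\<^sub>R (m' - m)"
    have w0: "w \<noteq> 0" unfolding w_def using r0 mm by simp
    have nwr: "r * norm w = norm (m - m')" unfolding w_def using r0
      by (simp add: norm_minus_commute)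
    have nwc: "norm w \<le> c * D"
    proof -
      have "r * norm w \<le> r * (c * D)" using nwr hyp by (simp add: mult_ac)
      then show ?thesis using r0 by simp
    qed
    define m0 where "m0 = measure lebesgue (K - (+) w ` K)"
    have keyK: "vK * norm w \<le> (D + norm w) * m0"
      unfolding vK_def D_def m0_def by (rule key[OF K w0])
    define S2' where "S2' = (\<lambda>k. m' + r *\<^sub>R k) ` K"
    have sub2: "(\<lambda>k. m' + r' *\<^sub>R k) ` K \<subseteq> S2'"
    proof
      fix p assume "p \<in> (\<lambda>k. m' + r' *\<^sub>R k) ` K"
      then obtain k where k: "k \<in> K" "p = m' + r' *\<^sub>R k" by auto
      have "(r' / r) *\<^sub>R k \<in> closed_segment 0 k"
        unfolding closed_segment_def using rr r0 by (auto intro!: exI[of _ "r'/r"])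
      then have "(r' / r) *\<^sub>R k \<in> K" using assms(2) k unfolding star_shaped0_def by blast
      moreover have "p = m' + r *\<^sub>R ((r' / r) *\<^sub>R k)" using k r0 by simp
      ultimately show "p \<in> S2'" unfolding S2'_def by blast
    qed
    have Teq: "(\<lambda>z. r *\<^sub>R z + m) ` (K - (+) w ` K) = (\<lambda>k. m + r *\<^sub>R k) ` K - S2'"
    proof (intro set_eqI iffI)
      fix p assume "p \<in> (\<lambda>z. r *\<^sub>R z + m) ` (K - (+) w ` K)"
      then obtain z where z: "z \<in> K" "z \<notin> (+) w ` K" "p = r *\<^sub>R z + m" by auto
      have "p \<notin> S2'"
      proof
        assume "p \<in> S2'"
        then obtain k where k: "k \<in> K" "p = m' + r *\<^sub>R k" unfolding S2'_def by auto
        have "r *\<^sub>R z = r *\<^sub>R (w + k)" using k z r0 unfolding w_def by (simp add: algebra_simps)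
        then have "z = w + k" using r0 by simp
        then show False using z k by auto
      qed
      then show "p \<in> (\<lambda>k. m + r *\<^sub>R k) ` K - S2'" using z by (auto simp: add.commute)
    next
      fix p assume "p \<in> (\<lambda>k. m + r *\<^sub>R k) ` K - S2'"
      then obtain z where z: "z \<in> K" "p = m + r *\<^sub>R z" "p \<notin> S2'" by auto
      have "z \<notin> (+) w ` K"
      proof
        assume "z \<in> (+) w ` K"
        then obtain k where k: "k \<in> K" "z = w + k" by auto
        have "p = m' + r *\<^sub>R k" using z k r0 unfolding w_def by (simp add: algebra_simps)
        then show False using z k unfolding S2'_def by auto
      qed
      then show "p \<in> (\<lambda>z. r *\<^sub>R z + m) ` (K - (+) w ` K)" using z by (auto simp: add.commute)
    qed
    have cS1: "compact ((\<lambda>k. m + r *\<^sub>R k) ` K)"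
      by (intro compact_continuous_image K continuous_intros)
    have cS2: "compact ((\<lambda>k. m' + r' *\<^sub>R k) ` K)"
      by (intro compact_continuous_image K continuous_intros)
    have cS2': "compact S2'" unfolding S2'_def
      by (intro compact_continuous_image K continuous_intros)
    have "r ^ DIM('a) * m0 = measure lebesgue ((\<lambda>z. r *\<^sub>R z + m) ` (K - (+) w ` K))"
      unfolding m0_def using measure_lebesgue_affine[of r m "K - (+) w ` K"] r0 by simp
    also have "\<dots> = measure lebesgue ((\<lambda>k. m + r *\<^sub>R k) ` K - S2')" by (simp only: Teq)
    also have "\<dots> \<le> measure lebesgue ((\<lambda>k. m + r *\<^sub>R k) ` K - (\<lambda>k. m' + r' *\<^sub>R k) ` K)"
    proof (rule measure_mono_fmeasurable)
      show "(\<lambda>k. m + r *\<^sub>R k) ` K - S2' \<subseteq> (\<lambda>k. m + r *\<^sub>R k) ` K - (\<lambda>k. m' + r' *\<^sub>R k) ` K"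
        using sub2 by blast
      show "(\<lambda>k. m + r *\<^sub>R k) ` K - S2' \<in> sets lebesgue"
        using cS1 cS2' by (intro sets.Diff fmeasurableD lmeasurable_compact)
      show "(\<lambda>k. m + r *\<^sub>R k) ` K - (\<lambda>k. m' + r' *\<^sub>R k) ` K \<in> fmeasurable lebesgue"
        using cS1 cS2 by (intro fmeasurable_Diff fmeasurableD lmeasurable_compact)
    qed
    finally have big: "r ^ DIM('a) * m0 \<le> measure lebesgue (Sset K x y - Sset K u v)"
      unfolding S1 S2 .
    have m0ge: "vK * norm w / ((c + 1) * D) \<le> m0"
    proof -
      have "vK * norm w \<le> (c * D + D) * m0"
        using keyK nwc m0_def by (smt (verit) measure_nonneg mult_right_mono)
      also have "\<dots> = m0 * ((c + 1) * D)" by (simp add: algebra_simps)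
      finally have h: "vK * norm w \<le> m0 * ((c + 1) * D)" .
      have pos: "(c + 1) * D > 0" using Dp assms(3) by simp
      show ?thesis using h by (simp only: pos_divide_le_eq[OF pos])
    qed
    have rd: "r ^ DIM('a) = r * r ^ (DIM('a) - 1)"
    proof -
      have "DIM('a) = Suc (DIM('a) - 1)" using DIM_positive[where 'a='a] by simp
      then show ?thesis by (metis power_Suc)
    qed
    have "(1 / (c + 1)) * (vK / D) * norm (m - m') * r ^ (DIM('a) - 1)
          = r ^ DIM('a) * (vK * norm w / ((c + 1) * D))"
      unfolding rd nwr[symmetric] by (simp add: field_simps)
    also have "\<dots> \<le> r ^ DIM('a) * m0" using m0ge r0 by (intro mult_left_mono) auto
    finally show ?thesis using big unfolding m_def m'_def r_def vK_def D_def by simp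
  qed
qed
end
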